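(* Let $S$ be a semigroup, let $a\in S$, and define $P=\{x\in Sa : x\,\mathscr L\, ax\}$. If $aSa\subseteq\operatorname{Reg}(S)$, then $P\subseteq\operatorname{Reg}(S)$; consequently, in this case $\operatorname{Reg}(Sa)=P$, and this set is a right ideal of the semigroup $Sa$ (i.e. $xy\in P$ for all $x\in P$, $y\in Sa$).
   Context: $Sa=\{xa:x\in S\}$, $aSa=\{axa:x\in S\}$. For a semigroup $T$, $\operatorname{Reg}(T)=\{x\in T: x=xyx \text{ for some } y\in T\}$. $\mathscr L$ is Green's $\mathscr L$-relation on $S$: $x\,\mathscr L\,y$ iff $S^1x=S^1y$, $S^1$ being $S$ with an identity adjoined if necessary. *)

theory Defs
  imports Main
begin

text \<open>The semigroup S is the carrier (UNIV) of a type of class semigroup_mult.\<close>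

definition left_mult_set :: "'a::semigroup_mult \<Rightarrow> 'a set" where
  "left_mult_set a = {x * a | x. True}"

definition sandwich_set :: "'a::semigroup_mult \<Rightarrow> 'a set" where
  "sandwich_set a = {a * x * a | x. True}"

definition Reg_in :: "'a::semigroup_mult set \<Rightarrow> 'a set" where
  "Reg_in T = {x \<in> T. \<exists>y \<in> T. x = x * y * x}"

abbreviation Reg :: "'a::semigroup_mult set" where
  "Reg \<equiv> Reg_in UNIV"

definition principal_left :: "'a::semigroup_mult \<Rightarrow> 'a set" where
  "principal_left x = insert x {s * x | s. True}"

definition green_L :: "'a::semigroup_mult \<Rightarrow> 'a \<Rightarrow> bool" where
  "green_L x y \<longleftrightarrow> principal_left x = principal_left y"

end

theory Submission
  imports Defs
begin

lemma pl_sub: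
  fixes u v :: "'a::semigroup_mult"
  assumes "u \<in> principal_left v" shows "principal_left u \<subseteq> principal_left v"
  using assms unfolding principal_left_def
  by (auto simp: mult.assoc[symmetric])

lemma gL_intro:
  fixes u v :: "'a::semigroup_mult"
  assumes "u \<in> principal_left v" "v \<in> principal_left u" shows "green_L u v"
  using pl_sub[OF assms(1)] pl_sub[OF assms(2)] unfolding green_L_def by blast

lemma gL_mem:
  fixes u v :: "'a::semigroup_mult"
  assumes "green_L u v" shows "u \<in> principal_left v"
  using assms unfolding green_L_def principal_left_def by auto

lemma P_reg:
  fixes a x :: "'a::semigroup_mult"
  assumes "x \<in> left_mult_set a" "green_L x (a * x)" "sandwich_set a \<subseteq> Reg"
  shows "\<exists>y. x = x * (y * a) * x"
proof -
  obtain s where s: "x = s * a" using assms(1) unfolding left_mult_set_def by auto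
  have "a * x \<in> sandwich_set a" using s unfolding sandwich_set_def by (auto simp: mult.assoc)
  then obtain y where y: "a * x = a * x * y * (a * x)" using assms(3) unfolding Reg_in_def by auto
  have "x \<in> principal_left (a * x)" using gL_mem[OF assms(2)] .
  then consider "x = a * x" | t where "x = t * (a * x)" unfolding principal_left_def by auto
  then show ?thesis
  proof cases
    case 1
    then have "x = x * y * (a * x)" using y by simp
    then show ?thesis by (metis mult.assoc)
  next
    case 2
    then have "x = t * (a * x * y * (a * x))" using y by simp
    also have "\<dots> = (t * (a * x)) * (y * a) * x" by (simp add: mult.assoc)
    finally show ?thesis using 2 by metis
  qed
qed

lemma reg_P:
  fixes a x z :: "'a::semigroup_mult"
  assumes "x \<in> left_mult_set a" "z \<in> left_mult_set a" "x = x * z * x"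
  shows "green_L x (a * x)"
proof -
  obtain w where w: "z = w * a" using assms(2) unfolding left_mult_set_def by auto
  have "x = (x * w) * (a * x)" using assms(3) w by (simp add: mult.assoc)
  then have "x \<in> principal_left (a * x)" unfolding principal_left_def by blast
  moreover have "a * x \<in> principal_left x" unfolding principal_left_def by blast
  ultimately show ?thesis by (rule gL_intro)
qed

theorem corollary3p3:
  fixes a :: "'a::semigroup_mult"
  defines "P \<equiv> {x \<in> left_mult_set a. green_L x (a * x)}"
  assumes "sandwich_set a \<subseteq> Reg"
  shows "P \<subseteq> Reg \<and> Reg_in (left_mult_set a) = P
         \<and> (\<forall>x \<in> P. \<forall>y \<in> left_mult_set a. x * y \<in> P)"
proof -
  have A: "x \<in> Reg_in (left_mult_set a)" if "x \<in> P" for x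
  proof -
    from that have x: "x \<in> left_mult_set a" "green_L x (a * x)" unfolding P_def by auto
    obtain y where "x = x * (y * a) * x" using P_reg[OF x assms(2)] by blast
    moreover have "y * a \<in> left_mult_set a" unfolding left_mult_set_def by blast
    ultimately show ?thesis using x unfolding Reg_in_def by blast
  qed
  have B: "Reg_in (left_mult_set a) \<subseteq> P"
    unfolding Reg_in_def P_def using reg_P by blast
  have C: "x * y \<in> P" if xP: "x \<in> P" and yS: "y \<in> left_mult_set a" for x y
  proof -
    obtain z where z: "z \<in> left_mult_set a" "x = x * z * x" "x \<in> left_mult_set a"
      using A[OF xP] unfolding Reg_in_def by blast
    obtain w where w: "z = w * a" using z(1) unfolding left_mult_set_def by auto
    obtain v where v: "y = v * a" using yS unfolding left_mult_set_def by auto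
    have m: "x * y \<in> left_mult_set a" using v unfolding left_mult_set_def by (auto intro!: exI[of _ "x * v"] simp: mult.assoc)
    have "x * y = (x * w) * (a * (x * y))" using z(2) w
      by (metis mult.assoc)
    then have "x * y \<in> principal_left (a * (x * y))" unfolding principal_left_def by blast
    moreover have "a * (x * y) \<in> principal_left (x * y)" unfolding principal_left_def by blast
    ultimately have "green_L (x * y) (a * (x * y))" by (rule gL_intro)
    then show ?thesis using m unfolding P_def by blast
  qed
  have "P \<subseteq> Reg" using A unfolding Reg_in_def by blast
  moreover have "Reg_in (left_mult_set a) = P" using A B by blast
  ultimately show ?thesis using C by blast
qed

end
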